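(* Let $k\ge3$, let $G$ be a graph, and let $L$ be a $k$-list assignment for $G$. Let $S=G[\{v_1,\dots,v_s\}]$ be an induced subgraph with $s\le k$. If for every $i\in\{1,\dots,s\}$ the number of neighbors of $v_i$ in $V(G)\setminus V(S)$ is less than $i$, then $S$ is safe in $G$ (with respect to $L$).
   Context: A $k$-list assignment $L$ for $G$ assigns to each vertex $v$ a set $L(v)$ of exactly $k$ colors; an $L$-coloring is a proper vertex coloring $f$ with $f(v)\in L(v)$. For an integer $n$ and $k\ge1$, $n\bmod^* k$ is the unique $m\in\{1,\dots,k\}$ with $n\equiv m\pmod k$. If $|V(G)|=n\ge 1$, an $L$-coloring $f$ of $G$ is strongly equitable (SE) if every color class has at most $\lceil n/k\rceil$ vertices and the number of colors whose class has exactly $\lceil n/k\rceil$ vertices (the full classes) is at most $n\bmod^* k$; the empty graph is regarded as SE $L$-colorable. A subgraph $S\subseteq G$ is safe in $G$ if every SE $L$-coloring of $G-V(S)$ (with the restriction of $L$) can be extended to an SE $L$-coloring of $G$. *)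

theory Defs
  imports Main
begin

definition graph :: "'a set \<Rightarrow> ('a \<Rightarrow> 'a \<Rightarrow> bool) \<Rightarrow> bool" where
  "graph V E \<longleftrightarrow> finite V \<and> (\<forall>u w. E u w \<longrightarrow> u \<in> V \<and> w \<in> V)
     \<and> (\<forall>u w. E u w \<longrightarrow> E w u) \<and> (\<forall>u. \<not> E u u)"

definition list_assignment :: "'a set \<Rightarrow> nat \<Rightarrow> ('a \<Rightarrow> 'c set) \<Rightarrow> bool" where
  "list_assignment V k L \<longleftrightarrow> (\<forall>v\<in>V. finite (L v) \<and> card (L v) = k)"

definition modstar :: "nat \<Rightarrow> nat \<Rightarrow> nat" where
  "modstar n k = (if n mod k = 0 then k else n mod k)"

definition L_coloring :: "'a set \<Rightarrow> ('a \<Rightarrow> 'a \<Rightarrow> bool) \<Rightarrow> ('a \<Rightarrow> 'c set) \<Rightarrow> ('a \<Rightarrow> 'c) \<Rightarrow> bool" where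
  "L_coloring W E L f \<longleftrightarrow> (\<forall>v\<in>W. f v \<in> L v) \<and> (\<forall>u\<in>W. \<forall>w\<in>W. E u w \<longrightarrow> f u \<noteq> f w)"

definition color_class :: "'a set \<Rightarrow> ('a \<Rightarrow> 'c) \<Rightarrow> 'c \<Rightarrow> 'a set" where
  "color_class W f c = {v\<in>W. f v = c}"

text \<open>Strongly equitable L-coloring of G[W] (k colors per list); ceiling(n/k) = (n+k-1) div k.
  The empty graph is regarded as SE colorable.\<close>
definition SE_coloring :: "'a set \<Rightarrow> ('a \<Rightarrow> 'a \<Rightarrow> bool) \<Rightarrow> nat \<Rightarrow> ('a \<Rightarrow> 'c set) \<Rightarrow> ('a \<Rightarrow> 'c) \<Rightarrow> bool" where
  "SE_coloring W E k L f \<longleftrightarrow> W = {} \<or>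
     (L_coloring W E L f \<and>
      (\<forall>c. card (color_class W f c) \<le> (card W + k - 1) div k) \<and>
      card {c. card (color_class W f c) = (card W + k - 1) div k} \<le> modstar (card W) k)"

definition safe :: "'a set \<Rightarrow> ('a \<Rightarrow> 'a \<Rightarrow> bool) \<Rightarrow> nat \<Rightarrow> ('a \<Rightarrow> 'c set) \<Rightarrow> 'a set \<Rightarrow> bool" where
  "safe V E k L T \<longleftrightarrow> (\<forall>f. SE_coloring (V - T) E k L f \<longrightarrow>
      (\<exists>g. SE_coloring V E k L g \<and> (\<forall>v\<in>V - T. g v = f v)))"

end

theory Submission
  imports Defs
begin

lemma core:
  fixes L B :: "nat \<Rightarrow> 'c set" and FULL :: "'c set"
  assumes L: "\<And>i. i\<in>{1..s} \<Longrightarrow> finite (L i) \<and> card (L i) = k"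
  and B: "\<And>i. i\<in>{1..s} \<Longrightarrow> finite (B i) \<and> card (B i) < i"
  and F: "finite FULL" "card FULL \<le> r" and srt: "s + r \<le> k + t" and sk: "s \<le> k"
  shows "j \<le> s \<Longrightarrow> \<exists>c. inj_on c {s-j<..s} \<and> (\<forall>i\<in>{s-j<..s}. c i \<in> L i - B i)
            \<and> card (c ` {s-j<..s} \<inter> FULL) \<le> t"
proof (induction j)
  case 0
  then show ?case by simp
next
  case (Suc j)
  then obtain c where inj: "inj_on c {s-j<..s}" and col: "\<forall>i\<in>{s-j<..s}. c i \<in> L i - B i"
    and cnt: "card (c ` {s-j<..s} \<inter> FULL) \<le> t" by auto
  define i where "i = s - j"
  have i1: "i \<in> {1..s}" using Suc.prems i_def by auto
  have Iset: "{s - Suc j<..s} = insert i {s-j<..s}" using Suc.prems i_def by auto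
  have inotin: "i \<notin> {s-j<..s}" using i_def by auto
  define C where "C = c ` {s-j<..s}"
  have finC: "finite C" unfolding C_def by simp
  have cardC: "card C = j" unfolding C_def using inj Suc.prems by (simp add: card_image)
  have Bi: "finite (B i)" "card (B i) \<le> s - j - 1" using B[OF i1] i_def by auto
  define Forb where "Forb = B i \<union> C \<union> (if card (C \<inter> FULL) \<ge> t then FULL else {})"
  have finF: "finite Forb" unfolding Forb_def using Bi finC F by auto
  have "card Forb < k"
  proof (cases "card (C \<inter> FULL) \<ge> t")
    case True
    have eq: "Forb = B i \<union> (C - FULL) \<union> FULL" unfolding Forb_def using True by auto
    have c1: "card (C - FULL) = card C - card (C \<inter> FULL)"
      using finC by (simp add: card_Diff_subset_Int)
    have "card (C \<inter> FULL) \<le> j" using cardC finC by (metis card_mono inf_le1)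
    then have c2: "card (C - FULL) \<le> j - t" using c1 cardC True by simp
    have "card Forb \<le> card (B i \<union> (C - FULL)) + card FULL"
      unfolding eq by (rule card_Un_le)
    also have "\<dots> \<le> card (B i) + card (C - FULL) + card FULL"
      using card_Un_le[of "B i" "C - FULL"] by simp
    also have "\<dots> \<le> (s - j - 1) + (j - t) + r" using Bi c2 F by simp
    finally have "card Forb \<le> (s - j - 1) + (j - t) + r" .
    then show ?thesis using srt Suc.prems True \<open>card (C \<inter> FULL) \<le> j\<close> by linarith
  next
    case False
    have "card Forb \<le> card (B i) + card C" unfolding Forb_def using False
      by (simp add: card_Un_le)
    then show ?thesis using Bi cardC sk Suc.prems by linarith
  qed
  then have "\<not> L i \<subseteq> Forb" using L[OF i1] finF card_mono[of Forb "L i"] by linarith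
  then obtain x where x: "x \<in> L i" "x \<notin> Forb" by auto
  define c' where "c' = c(i := x)"
  have img: "c' ` {s - Suc j<..s} = insert x C" unfolding Iset c'_def C_def using inotin by auto
  have xC: "x \<notin> C" "x \<notin> B i" using x unfolding Forb_def by auto
  have "inj_on c' {s - Suc j<..s}" unfolding Iset c'_def using inj inotin xC
    by (auto simp: inj_on_def C_def)
  moreover have "\<forall>i'\<in>{s - Suc j<..s}. c' i' \<in> L i' - B i'"
    unfolding Iset c'_def using col inotin x xC by auto
  moreover have "card (c' ` {s - Suc j<..s} \<inter> FULL) \<le> t"
  proof (cases "x \<in> FULL")
    case True
    then have "\<not> card (C \<inter> FULL) \<ge> t" using x unfolding Forb_def by auto
    moreover have "insert x C \<inter> FULL = insert x (C \<inter> FULL)" using True by auto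
    ultimately show ?thesis unfolding img using xC finC by simp
  next
    case False
    then have "insert x C \<inter> FULL = C \<inter> FULL" by auto
    then show ?thesis unfolding img using cnt C_def by simp
  qed
  ultimately show ?case by blast
qed

lemma ceil_char:
  assumes "n = (c - 1) * k + r" "1 \<le> r" "r \<le> k" "c \<ge> 1"
  shows "(n + k - 1) div k = c" "modstar n k = r"
proof -
  obtain d where d: "c = Suc d" using assms by (cases c) auto
  have "c * k = k + d * k" using d by simp
  then have "n + k - 1 = (r - 1) + c * k" using assms d by simp
  moreover have "((r - 1) + c * k) div k = c + (r - 1) div k"
    by (rule div_mult_self1) (use assms in simp)
  ultimately have "(n + k - 1) div k = c + (r - 1) div k" by simp
  then show "(n + k - 1) div k = c" using assms by simp
  have "n mod k = r mod k" using assms by simp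
  then show "modstar n k = r" unfolding modstar_def using assms
    by (cases "r = k") auto
qed

lemma ceil_decomp:
  assumes "n \<ge> 1" "k \<ge> 1"
  shows "n = ((n + k - 1) div k - 1) * k + modstar n k" "1 \<le> modstar n k" "modstar n k \<le> k"
    "(n + k - 1) div k \<ge> 1"
proof -
  have "k div k \<le> (n + k - 1) div k" using assms by (intro div_le_mono) simp
  then have "(n + k - 1) div k \<ge> 1" using assms by simp
  then show "(n + k - 1) div k \<ge> 1" .
  show "1 \<le> modstar n k" "modstar n k \<le> k" unfolding modstar_def using assms
    by (auto simp: less_imp_le)
  show "n = ((n + k - 1) div k - 1) * k + modstar n k"
  proof (cases "n mod k = 0")
    case True
    then obtain q where q: "n = q * k" by (metis mod_eq_0_iff_dvd dvdE mult.commute)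
    then have "q \<ge> 1" using assms by (cases q) auto
    have "n + k - 1 = (k - 1) + q * k" using q assms by simp
    moreover have "((k - 1) + q * k) div k = q + (k - 1) div k"
      by (rule div_mult_self1) (use assms in simp)
    ultimately have "(n + k - 1) div k = q + (k - 1) div k" by simp
    then have "(n + k - 1) div k = q" using assms by simp
    then show ?thesis using q True \<open>q \<ge> 1\<close> unfolding modstar_def by (cases q) auto
  next
    case False
    have m: "n mod k \<ge> 1" "n mod k < k" using False assms by auto
    have "n = n div k * k + n mod k" by simp
    then have "n + k - 1 = (n mod k - 1) + (n div k + 1) * k" using m assms by (simp add: algebra_simps)
    moreover have "((n mod k - 1) + (n div k + 1) * k) div k = (n div k + 1) + (n mod k - 1) div k"
      by (rule div_mult_self1) (use assms in simp)
    ultimately have "(n + k - 1) div k = (n div k + 1) + (n mod k - 1) div k" by simp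
    then have "(n + k - 1) div k = n div k + 1" using m by simp
    then show ?thesis using False unfolding modstar_def by (simp add: mult.commute)
  qed
qed


theorem lemma4p1:
  fixes V :: "'a set" and E :: "'a \<Rightarrow> 'a \<Rightarrow> bool" and k s :: nat
    and L :: "'a \<Rightarrow> 'c set" and v :: "nat \<Rightarrow> 'a"
  assumes "k \<ge> 3"
    and "graph V E"
    and "list_assignment V k L"
    and "inj_on v {1..s}" and "v ` {1..s} \<subseteq> V"
    and "s \<le> k"
    and "\<forall>i\<in>{1..s}. card {u \<in> V - v ` {1..s}. E (v i) u} < i"
  shows "safe V E k L (v ` {1..s})"
proof -
  define T where "T = v ` {1..s}"
  note k3 = assms(1) and G = assms(2) and LA = assms(3) and injv = assms(4) and TV = assms(5)[folded T_def]
    and sk = assms(6) and deg = assms(7)[folded T_def]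
  have finV: "finite V" using G unfolding graph_def by auto
  have Esym: "\<And>u w. E u w \<Longrightarrow> E w u" and Eirr: "\<And>u. \<not> E u u" and EV: "\<And>u w. E u w \<Longrightarrow> u \<in> V \<and> w \<in> V"
    using G unfolding graph_def by auto
  have cardT: "card T = s" unfolding T_def using injv by (simp add: card_image)
  show ?thesis unfolding safe_def T_def[symmetric]
  proof (intro allI impI)
    fix f assume SE: "SE_coloring (V - T) E k L f"
    define W where "W = V - T"
    have finW: "finite W" using finV W_def by auto
    define B where "B i = f ` {u \<in> W. E (v i) u}" for i
    have Bp: "finite (B i) \<and> card (B i) < i" if "i \<in> {1..s}" for i
    proof -
      have "card (B i) \<le> card {u \<in> W. E (v i) u}" unfolding B_def
        using finW by (intro card_image_le) auto
      then show ?thesis using deg that unfolding W_def B_def using finV by fastforce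
    qed
    have Lp: "finite (L (v i)) \<and> card (L (v i)) = k" if "i \<in> {1..s}" for i
    proof -
      have "v i \<in> V" using TV that unfolding T_def by auto
      then show ?thesis using LA unfolding list_assignment_def by auto
    qed
    define c0 where "c0 = (card W + k - 1) div k"
    define FULL where "FULL = (if W = {} then {} else {col. card (color_class W f col) = c0})"
    define r where "r = (if W = {} then 0 else modstar (card W) k)"
    define t where "t = r + s - k"
    have dec: "card W = (c0 - 1) * k + r" "1 \<le> r" "r \<le> k" "1 \<le> c0" if "W \<noteq> {}"
      using ceil_decomp[of "card W" k] that finW k3 unfolding c0_def r_def
      by (auto simp: card_gt_0_iff Suc_le_eq)
    have SEW: "L_coloring W E L f" "\<forall>col. card (color_class W f col) \<le> c0" "card FULL \<le> r"
      if "W \<noteq> {}" using SE that unfolding SE_coloring_def W_def c0_def FULL_def r_def by auto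
    have finFULL: "finite FULL"
    proof (cases "W = {}")
      case False
      have "FULL \<subseteq> f ` W"
      proof
        fix col assume "col \<in> FULL"
        then have "card (color_class W f col) = c0" using False FULL_def by auto
        then have "color_class W f col \<noteq> {}" using dec[OF False] by auto
        then show "col \<in> f ` W" unfolding color_class_def by auto
      qed
      then show ?thesis using finW finite_surj by blast
    qed (simp add: FULL_def)
    have cardFULL: "card FULL \<le> r" using SEW by (cases "W = {}") (auto simp: FULL_def)
    have srt: "s + r \<le> k + t" unfolding t_def by simp
    obtain c where cinj: "inj_on c {1..s}" and ccol: "\<forall>i\<in>{1..s}. c i \<in> L (v i) - B i"
      and ccnt: "card (c ` {1..s} \<inter> FULL) \<le> t"
    proof -
      have "\<exists>c. inj_on c {s-s<..s} \<and> (\<forall>i\<in>{s-s<..s}. c i \<in> L (v i) - B i)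
            \<and> card (c ` {s-s<..s} \<inter> FULL) \<le> t"
        by (rule core[of s "\<lambda>i. L (v i)" k B FULL r t s]) (use Lp Bp finFULL cardFULL srt sk in auto)
      moreover have "{s-s<..s} = {1..s}" by auto
      ultimately show ?thesis using that by auto
    qed
    define g where "g x = (if x \<in> T then c (the_inv_into {1..s} v x) else f x)" for x
    have gT: "g (v i) = c i" if "i \<in> {1..s}" for i
      using that injv unfolding g_def T_def by (auto simp: the_inv_into_f_f)
    have gW: "g x = f x" if "x \<notin> T" for x using that g_def by auto
    have gimg: "g ` T = c ` {1..s}" unfolding T_def using gT by (auto simp: image_image)
    have ginj: "inj_on g T"
    proof (rule inj_onI)
      fix x y assume "x \<in> T" "y \<in> T" "g x = g y"
      then obtain i j where "i \<in> {1..s}" "j \<in> {1..s}" "x = v i" "y = v j" unfolding T_def by auto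
      then show "x = y" using \<open>g x = g y\<close> gT cinj by (metis inj_onD)
    qed
    have VWT: "V = W \<union> T" "W \<inter> T = {}" using TV W_def by auto
    have cardV: "card V = card W + s" using VWT finV cardT
      by (metis card_Un_disjoint finite_Un)
    have Tcnt: "card {x \<in> T. g x = col} = (if col \<in> g ` T then 1 else 0)" for col
    proof (cases "col \<in> g ` T")
      case True
      then obtain x0 where x0: "x0 \<in> T" "g x0 = col" by auto
      then have "{x \<in> T. g x = col} = {x0}" using ginj by (auto dest: inj_onD)
      then show ?thesis using True by simp
    next
      case False
      have e: "{x \<in> T. g x = col} = {}" using False by auto
      show ?thesis using False by (simp add: e)
    qed
    have ccard: "card (color_class V g col) = card (color_class W f col) + (if col \<in> g ` T then 1 else 0)" for col
    proof -
      have "color_class V g col = color_class W f col \<union> {x \<in> T. g x = col}"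
        unfolding color_class_def using VWT gW by auto
      moreover have "color_class W f col \<inter> {x \<in> T. g x = col} = {}"
        unfolding color_class_def using VWT by auto
      moreover have "finite (color_class W f col)" "finite {x \<in> T. g x = col}"
        unfolding color_class_def using finW finV TV by (auto intro: finite_subset)
      ultimately show ?thesis using Tcnt by (simp add: card_Un_disjoint)
    qed
    have Lcol: "L_coloring V E L g"
      unfolding L_coloring_def
    proof (intro conjI ballI impI)
      fix x assume "x \<in> V"
      show "g x \<in> L x"
      proof (cases "x \<in> T")
        case True
        then obtain i where "i \<in> {1..s}" "x = v i" unfolding T_def by auto
        then show ?thesis using gT ccol by auto
      next
        case False
        then have "x \<in> W" "W \<noteq> {}" using \<open>x \<in> V\<close> W_def by auto
        then show ?thesis using SEW(1) gW False unfolding L_coloring_def by auto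
      qed
    next
      fix x y assume xy: "x \<in> V" "y \<in> V" "E x y"
      have cross: "g a \<noteq> g b" if "a \<in> T" "b \<in> W" "E a b" for a b
      proof -
        obtain i where i: "i \<in> {1..s}" "a = v i" using \<open>a \<in> T\<close> unfolding T_def by auto
        have "f b \<in> B i" unfolding B_def using that i by auto
        have bT: "b \<notin> T" using that(2) VWT by auto
        have gb: "g b = f b" using gW[OF bT] .
        have ga: "g a = c i" using gT i by simp
        have "c i \<notin> B i" using ccol i(1) by blast
        then show ?thesis using \<open>f b \<in> B i\<close> gb ga by metis
      qed
      show "g x \<noteq> g y"
      proof (cases "x \<in> T"; cases "y \<in> T")
        assume "x \<in> T" "y \<in> T"
        moreover have "x \<noteq> y" using xy Eirr by auto
        ultimately show ?thesis using ginj by (auto dest: inj_onD)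
      next
        assume "x \<in> T" "y \<notin> T" then show ?thesis using cross xy W_def by auto
      next
        assume "x \<notin> T" "y \<in> T" then show ?thesis using cross[of y x] xy W_def Esym by auto
      next
        assume "x \<notin> T" "y \<notin> T"
        then have "x \<in> W" "y \<in> W" using xy W_def by auto
        then show ?thesis using SEW(1) gW \<open>x \<notin> T\<close> \<open>y \<notin> T\<close> xy unfolding L_coloring_def by auto
      qed
    qed
    have finGT: "finite (g ` T)" using finV TV by (auto intro: finite_subset)
    have cardGT: "card (g ` T) = s" using ginj cardT by (simp add: card_image)
    have "SE_coloring V E k L g"
    proof (cases "W = {}")
      case True
      show ?thesis
      proof (cases "V = {}")
        case True then show ?thesis unfolding SE_coloring_def by simp
      next
        case False
        have cW: "card (color_class W f col) = 0" for col using True unfolding color_class_def by simp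
        have "card V > 0" using False finV by (simp add: card_gt_0_iff)
        then have s1: "s \<ge> 1" using cardV True by simp
        have ce: "(card V + k - 1) div k = 1" "modstar (card V) k = s"
          using ceil_char[of "card V" 1 k s] cardV True s1 sk by auto
        have "{col. card (color_class V g col) = 1} = g ` T" using ccard cW by auto
        then show ?thesis unfolding SE_coloring_def using Lcol ce ccard cW cardGT by auto
      qed
    next
      case False
      note d = dec[OF False] and S = SEW[OF False]
      have FULLd: "FULL = {col. card (color_class W f col) = c0}" using False FULL_def by simp
      have cg: "card (g ` T \<inter> FULL) \<le> t" using ccnt gimg by simp
      show ?thesis
      proof (cases "r + s \<le> k")
        case True
        have t0: "t = 0" using True t_def by simp
        have dis: "g ` T \<inter> FULL = {}" using cg t0 finFULL by auto
        have eqV: "card V = (c0 - 1) * k + (r + s)" using cardV d(1) by simp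
        have ce: "(card V + k - 1) div k = c0" "modstar (card V) k = r + s"
          using ceil_char[OF eqV] d True by auto
        have bd: "card (color_class V g col) \<le> c0" for col
        proof (cases "col \<in> g ` T")
          case True
          then have "col \<notin> FULL" using dis by auto
          then have "card (color_class W f col) < c0" using S(2) FULLd by (metis le_neq_implies_less mem_Collect_eq)
          then show ?thesis using ccard[of col] by simp
        next
          case False then show ?thesis using ccard[of col] S(2) by simp
        qed
        have sub: "{col. card (color_class V g col) = c0} \<subseteq> FULL \<union> g ` T"
          using ccard FULLd by auto
        have "card {col. card (color_class V g col) = c0} \<le> card (FULL \<union> g ` T)"
          using sub finFULL finGT by (intro card_mono) auto
        also have "\<dots> \<le> card FULL + card (g ` T)" by (rule card_Un_le)
        also have "\<dots> \<le> r + s" using S(3) cardGT by simp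
        finally show ?thesis unfolding SE_coloring_def using Lcol ce bd by auto
      next
        case False
        have tt: "t = r + s - k" using t_def by simp
        have m: "(c0 - 1) * k + k = c0 * k" using d(4) by (cases c0) auto
        have eqV: "card V = (c0 + 1 - 1) * k + (r + s - k)" using cardV d(1) m False by simp
        have ce: "(card V + k - 1) div k = c0 + 1" "modstar (card V) k = t"
          using ceil_char[OF eqV] d False tt sk by auto
        have bd: "card (color_class V g col) \<le> c0 + 1" for col
        proof -
          have "card (color_class W f col) \<le> c0" using S(2) by blast
          then show ?thesis using ccard[of col] by simp
        qed
        have sub: "{col. card (color_class V g col) = c0 + 1} \<subseteq> g ` T \<inter> FULL"
        proof
          fix col assume "col \<in> {col. card (color_class V g col) = c0 + 1}"
          then have h: "card (color_class V g col) = c0 + 1" by simp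
          have le: "card (color_class W f col) \<le> c0" using S(2) by simp
          show "col \<in> g ` T \<inter> FULL"
          proof (cases "col \<in> g ` T")
            case True then show ?thesis using h ccard[of col] FULLd by simp
          next
            case False then show ?thesis using h ccard[of col] le by simp
          qed
        qed
        have "card {col. card (color_class V g col) = c0 + 1} \<le> card (g ` T \<inter> FULL)"
          using sub finFULL by (intro card_mono) auto
        also have "\<dots> \<le> t" by (rule cg)
        finally show ?thesis unfolding SE_coloring_def using Lcol ce bd by auto
      qed
    qed
    moreover have "\<forall>x\<in>V - T. g x = f x" using gW by auto
    ultimately show "\<exists>g. SE_coloring V E k L g \<and> (\<forall>x\<in>V - T. g x = f x)" by blast
  qed
qed

end
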